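(* Let $n,\ell\in\mathbb Z$ with $n>2\ell\ge6$, let $q$ be a primitive $2\ell$-th root of unity in a field $k$, and let $w_1,w_2$ be non-integral. Then for every half-diagram $D$ in the standard basis of $\mathcal S_n(-n+2\ell)$ the hook product $h_3(D)$ is defined (its reduced expression specialises without a vanishing denominator), and $h_3(D)\neq0$ for some such $D$.
   Context: Setting: symplectic blob algebra $b_n^x(-[2],-[w_1],-[w_2],[w_1+1],[w_2+1],\kappa_{LR})$ (generators $e,e_1,\dots,e_{n-1},f$; basis of Temperley–Lieb diagrams whose lines may carry a left blob if deformable to the left edge without crossing lines and a right blob if deformable to the right edge). Quantum numbers: $[x]=\frac{q^x-q^{-x}}{q-q^{-1}}$; $w_i$ are formal, with $Q_i=q^{w_i}$ and $[w_i+x]=\frac{Q_iq^x-Q_i^{-1}q^{-x}}{q-q^{-1}}$; "$w_i$ non-integral" means $Q_i\notin\pm q^{\mathbb Z}$. Falling factorials $[w]_\ell!=[w][w-1]\cdots[w-\ell+1]$, $[\ell]!=[1][2]\cdots[\ell]$. The cell module $\mathcal S_n(-n+2\ell)$ has basis the half-diagrams $D$: $n$ vertices on a top edge, $\ell$ non-crossing arcs joining pairs of top vertices and $n-2\ell$ undecorated non-crossing propagating lines running to the bottom; an arc may carry a left blob if it can be deformed to touch the left edge without crossing lines, or a right blob if it can be deformed to the right edge. Number top vertices $1,\dots,n$ left to right and the bottom ends of propagating lines $n+1,\dots,2n-2\ell$ from right to left; each line $g$ is then $(a,a+2b+1)$ with $b\ge0$. Define $h_3(g)=[b+1]$ if $g$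 is an undecorated arc; $1$ if $g$ is propagating and $a\equiv1,\dots,2\ell \pmod{4\ell}$; $-1$ if $g$ is propagating and $a\equiv 2\ell+1,\dots,4\ell\pmod{4\ell}$; $\left[\frac{a+2b+1}{2}\right]\left[\frac{2w_1-a+1}{2}\right]$ if $g$ has a left blob; $\left[\frac{n-a+1}{2}\right]\left[\frac{2w_2-n+a+2b+1}{2}\right]$ if $g$ has a right blob. Set $h_3(D)=[\ell]!\,[w_1]_\ell!\,[w_2]_\ell!\big/\prod_{g\in D}h_3(g)$, computed as a rational function in indeterminates $q,Q_1,Q_2$ with all cancellations performed before specialising $q$ (and $Q_1,Q_2$). *)

theory Defs
  imports Main "HOL-Computational_Algebra.Computational_Algebra"
begin

text \<open>Polynomials in three indeterminates over k are modelled as nested univariate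
polynomials: the innermost variable is q, the middle one Q1, the outermost one Q2.\<close>

type_synonym 'k rpoly = "'k poly poly poly"
type_synonym 'k rfun = "'k rpoly fract"

definition var_q :: "'k::field_gcd rfun" where
  "var_q = to_fract [:[:[:0, 1:]:]:]"

definition var_Q1 :: "'k::field_gcd rfun" where
  "var_Q1 = to_fract [:[:0, 1:]:]"

definition var_Q2 :: "'k::field_gcd rfun" where
  "var_Q2 = to_fract [:0, 1:]"

definition qnum :: "int \<Rightarrow> 'k::field_gcd rfun" where
  "qnum x = (var_q powi x - var_q powi (-x)) / (var_q - inverse var_q)"

text \<open>[w_i + x] for integer x, with Q_i = q^{w_i}; Q is var_Q1 or var_Q2.\<close>
definition qnumw :: "'k::field_gcd rfun \<Rightarrow> int \<Rightarrow> 'k rfun" where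
  "qnumw Q x = (Q * var_q powi x - inverse Q * var_q powi (-x)) / (var_q - inverse var_q)"

definition qfact :: "nat \<Rightarrow> 'k::field_gcd rfun" where
  "qfact l = (\<Prod>t\<in>{1..l}. qnum (int t))"

definition qfallfact :: "'k::field_gcd rfun \<Rightarrow> nat \<Rightarrow> 'k rfun" where
  "qfallfact Q l = (\<Prod>t\<in>{0..<l}. qnumw Q (- int t))"

definition eval3 :: "'k::field_gcd \<Rightarrow> 'k \<Rightarrow> 'k \<Rightarrow> 'k rpoly \<Rightarrow> 'k" where
  "eval3 q0 Q10 Q20 P = poly (poly (poly P [:[:Q20:]:]) [:Q10:]) q0"

definition defined_at :: "'k::field_gcd \<Rightarrow> 'k \<Rightarrow> 'k \<Rightarrow> 'k rfun \<Rightarrow> bool" where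
  "defined_at q0 Q10 Q20 h \<longleftrightarrow> eval3 q0 Q10 Q20 (snd (quot_of_fract h)) \<noteq> 0"

definition value_at :: "'k::field_gcd \<Rightarrow> 'k \<Rightarrow> 'k \<Rightarrow> 'k rfun \<Rightarrow> 'k" where
  "value_at q0 Q10 Q20 h =
     eval3 q0 Q10 Q20 (fst (quot_of_fract h)) / eval3 q0 Q10 Q20 (snd (quot_of_fract h))"

datatype blob = Undec | LBlob | RBlob

text \<open>A half-diagram is given by its set of arcs (pairs (i,j), 1 \<le> i < j \<le> n, of top
vertices) together with a decoration of each arc.  The remaining top vertices are the
feet of the undecorated, non-crossing propagating lines, which are thereby determined.\<close>
type_synonym halfdiag = "(nat \<times> nat) set \<times> (nat \<times> nat \<Rightarrow> blob)"

definition endpoints :: "(nat \<times> nat) set \<Rightarrow> nat set" where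
  "endpoints A = fst ` A \<union> snd ` A"

definition free_vertices :: "nat \<Rightarrow> (nat \<times> nat) set \<Rightarrow> nat set" where
  "free_vertices n A = {1..n} - endpoints A"

text \<open>An arc can be deformed to touch the left (right) edge without crossing lines iff
it is not nested inside another arc and no propagating line lies to its left (right).\<close>
definition left_exposed :: "nat \<Rightarrow> (nat \<times> nat) set \<Rightarrow> nat \<times> nat \<Rightarrow> bool" where
  "left_exposed n A g \<longleftrightarrow>
     (\<forall>(i', j')\<in>A. \<not> (i' < fst g \<and> snd g < j')) \<and>
     (\<forall>v\<in>free_vertices n A. \<not> v < fst g)"

definition right_exposed :: "nat \<Rightarrow> (nat \<times> nat) set \<Rightarrow> nat \<times> nat \<Rightarrow> bool" where
  "right_exposed n A g \<longleftrightarrow>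
     (\<forall>(i', j')\<in>A. \<not> (i' < fst g \<and> snd g < j')) \<and>
     (\<forall>v\<in>free_vertices n A. \<not> snd g < v)"

definition is_halfdiag :: "nat \<Rightarrow> nat \<Rightarrow> halfdiag \<Rightarrow> bool" where
  "is_halfdiag n l D \<longleftrightarrow>
     (let A = fst D; dec = snd D in
       card A = l \<and>
       (\<forall>(i, j)\<in>A. 1 \<le> i \<and> i < j \<and> j \<le> n) \<and>
       (\<forall>g\<in>A. \<forall>g'\<in>A. g \<noteq> g' \<longrightarrow>
          {fst g, snd g} \<inter> {fst g', snd g'} = {}) \<and>
       (\<forall>(i, j)\<in>A. \<forall>(i', j')\<in>A. \<not> (i < i' \<and> i' < j \<and> j < j')) \<and>
       (\<forall>(i, j)\<in>A. \<forall>v\<in>free_vertices n A. \<not> (i < v \<and> v < j)) \<and>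
       (\<forall>g\<in>A. dec g = LBlob \<longrightarrow> left_exposed n A g) \<and>
       (\<forall>g\<in>A. dec g = RBlob \<longrightarrow> right_exposed n A g) \<and>
       (\<forall>g. g \<notin> A \<longrightarrow> dec g = Undec))"

definition halfdiags :: "nat \<Rightarrow> nat \<Rightarrow> halfdiag set" where
  "halfdiags n l = {D. is_halfdiag n l D}"

text \<open>Bottom end of the propagating line with top vertex a: bottom ends are numbered
n+1, ..., 2n-2l from right to left.\<close>
definition bottom_end :: "nat \<Rightarrow> (nat \<times> nat) set \<Rightarrow> nat \<Rightarrow> nat" where
  "bottom_end n A a = n + card {v \<in> free_vertices n A. a \<le> v}"

definition h3_prop :: "nat \<Rightarrow> nat \<Rightarrow> 'k::field_gcd rfun" where
  "h3_prop l a = (if a mod (4 * l) \<in> {1..2 * l} then 1 else -1)"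

text \<open>h_3 of an arc g = (a, j) with j = a+2b+1.  For arcs in a half-diagram the arguments
(a+2b+1)/2, (1-a)/2, (n-a+1)/2 and (-n+a+2b+1)/2 are integers; they are computed exactly
with integer division.\<close>
definition h3_arc :: "nat \<Rightarrow> blob \<Rightarrow> nat \<times> nat \<Rightarrow> 'k::field_gcd rfun" where
  "h3_arc n d g = (let a = int (fst g); j = int (snd g); b = (j - a - 1) div 2 in
     (case d of
        Undec \<Rightarrow> qnum (b + 1)
      | LBlob \<Rightarrow> qnum (j div 2) * qnumw var_Q1 ((1 - a) div 2)
      | RBlob \<Rightarrow> qnum ((int n - a + 1) div 2) * qnumw var_Q2 ((j - int n) div 2)))"

definition h3 :: "nat \<Rightarrow> nat \<Rightarrow> halfdiag \<Rightarrow> 'k::field_gcd rfun" where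
  "h3 n l D =
     (qfact l * qfallfact var_Q1 l * qfallfact var_Q2 l) /
     ((\<Prod>g\<in>fst D. h3_arc n (snd D g) g) *
      (\<Prod>a\<in>free_vertices n (fst D). h3_prop l a))"

end

theory Submission
  imports Defs
begin



context fixes q0 Q1 Q2 :: "'k::field_gcd" begin

definition ev :: "'k rfun \<Rightarrow> 'k \<Rightarrow> bool" where
 "ev h c \<longleftrightarrow> (\<exists>P R. h = to_fract P / to_fract R \<and> eval3 q0 Q1 Q2 R \<noteq> 0 \<and>
     c = eval3 q0 Q1 Q2 P / eval3 q0 Q1 Q2 R)"

lemma eval3_mult[simp]: "eval3 q0 Q1 Q2 (P * R) = eval3 q0 Q1 Q2 P * eval3 q0 Q1 Q2 R"
  by (simp add: eval3_def)
lemma eval3_add[simp]: "eval3 q0 Q1 Q2 (P + R) = eval3 q0 Q1 Q2 P + eval3 q0 Q1 Q2 R"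
  by (simp add: eval3_def)
lemma eval3_diff[simp]: "eval3 q0 Q1 Q2 (P - R) = eval3 q0 Q1 Q2 P - eval3 q0 Q1 Q2 R"
  by (simp add: eval3_def)
lemma eval3_uminus[simp]: "eval3 q0 Q1 Q2 (- P) = - eval3 q0 Q1 Q2 P"
  by (simp add: eval3_def)
lemma eval3_1[simp]: "eval3 q0 Q1 Q2 1 = 1"
  by (simp add: eval3_def)
lemma eval3_0[simp]: "eval3 q0 Q1 Q2 0 = 0"
  by (simp add: eval3_def)

lemma ev_imp:
  assumes "ev h c"
  shows "defined_at q0 Q1 Q2 h \<and> value_at q0 Q1 Q2 h = c"
proof -
  obtain P R where h: "h = to_fract P / to_fract R" and R: "eval3 q0 Q1 Q2 R \<noteq> 0"
    and c: "c = eval3 q0 Q1 Q2 P / eval3 q0 Q1 Q2 R"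
    using assms unfolding ev_def by blast
  have R0: "R \<noteq> 0" using R by auto
  obtain P' R' where pq: "quot_of_fract h = (P', R')" by (cases "quot_of_fract h")
  have R'0: "R' \<noteq> 0" using snd_quot_of_fract_nonzero[of h] pq by simp
  have cop: "coprime P' R'" using quot_of_fract_in_normalized_fracts[of h] pq
    by (simp add: normalized_fracts_def)
  have "Fract P' R' = h" using quot_to_fract_quot_of_fract[of h] pq
    by (simp add: quot_to_fract_def)
  also have "h = Fract P R" using h by (simp add: Fract_conv_to_fract)
  finally have eq: "P' * R = P * R'" using R0 R'0 by (simp add: eq_fract)
  hence "R' dvd P' * R" by (metis dvd_triv_right)
  hence "R' dvd R" using cop by (simp add: coprime_dvd_mult_right_iff coprime_commute)
  then obtain S where S: "R = R' * S" by blast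
  have e1: "eval3 q0 Q1 Q2 R' \<noteq> 0" using R S by auto
  have e2: "eval3 q0 Q1 Q2 P' * eval3 q0 Q1 Q2 R = eval3 q0 Q1 Q2 P * eval3 q0 Q1 Q2 R'"
    using arg_cong[OF eq, of "eval3 q0 Q1 Q2"] by simp
  show ?thesis using e1 e2 R pq unfolding c
    by (simp add: defined_at_def value_at_def frac_eq_eq)
qed

lemma ev_poly: "ev (to_fract P) (eval3 q0 Q1 Q2 P)"
  unfolding ev_def by (rule exI[of _ P], rule exI[of _ 1]) simp

lemma ev_mult: "ev a x \<Longrightarrow> ev b y \<Longrightarrow> ev (a * b) (x * y)"
proof -
  assume "ev a x" "ev b y"
  then obtain P R P' R' where "a = to_fract P / to_fract R" "eval3 q0 Q1 Q2 R \<noteq> 0"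
     "x = eval3 q0 Q1 Q2 P / eval3 q0 Q1 Q2 R" "b = to_fract P' / to_fract R'" "eval3 q0 Q1 Q2 R' \<noteq> 0"
     "y = eval3 q0 Q1 Q2 P' / eval3 q0 Q1 Q2 R'" unfolding ev_def by blast
  thus ?thesis unfolding ev_def
    by (intro exI[of _ "P * P'"] exI[of _ "R * R'"]) simp
qed

lemma ev_add: "ev a x \<Longrightarrow> ev b y \<Longrightarrow> ev (a + b) (x + y)"
proof -
  assume "ev a x" "ev b y"
  then obtain P R P' R' where "a = to_fract P / to_fract R" "eval3 q0 Q1 Q2 R \<noteq> 0"
     "x = eval3 q0 Q1 Q2 P / eval3 q0 Q1 Q2 R" "b = to_fract P' / to_fract R'" "eval3 q0 Q1 Q2 R' \<noteq> 0"
     "y = eval3 q0 Q1 Q2 P' / eval3 q0 Q1 Q2 R'" unfolding ev_def by blast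
  moreover have "R \<noteq> 0" "R' \<noteq> 0" using calculation by auto
  ultimately show ?thesis unfolding ev_def
    by (intro exI[of _ "P * R' + P' * R"] exI[of _ "R * R'"]) (simp add: add_frac_eq)
qed

lemma ev_uminus: "ev a x \<Longrightarrow> ev (- a) (- x)"
  unfolding ev_def
  apply (elim exE conjE)
  subgoal for P R
    by (rule exI[of _ "- P"], rule exI[of _ "R"]) simp
  done

lemma ev_diff: "ev a x \<Longrightarrow> ev b y \<Longrightarrow> ev (a - b) (x - y)"
  using ev_add[of a x "-b" "-y"] ev_uminus[of b y] by simp

lemma ev_inverse: "ev a x \<Longrightarrow> x \<noteq> 0 \<Longrightarrow> ev (inverse a) (inverse x)"
proof -
  assume "ev a x" "x \<noteq> 0"
  then obtain P R where "a = to_fract P / to_fract R" "eval3 q0 Q1 Q2 R \<noteq> 0"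
     "x = eval3 q0 Q1 Q2 P / eval3 q0 Q1 Q2 R" unfolding ev_def by blast
  moreover have "eval3 q0 Q1 Q2 P \<noteq> 0" using calculation \<open>x \<noteq> 0\<close> by auto
  ultimately show ?thesis unfolding ev_def
    by (intro exI[of _ R] exI[of _ P]) simp
qed

lemma ev_divide: "ev a x \<Longrightarrow> ev b y \<Longrightarrow> y \<noteq> 0 \<Longrightarrow> ev (a / b) (x / y)"
  using ev_mult[OF _ ev_inverse] by (simp add: divide_inverse)

lemma ev_1: "ev 1 1" using ev_poly[of 1] by simp

lemma ev_power: "ev a x \<Longrightarrow> ev (a ^ m) (x ^ m)"
  by (induction m) (simp_all add: ev_1 ev_mult)

lemma ev_powi: "ev a x \<Longrightarrow> x \<noteq> 0 \<Longrightarrow> ev (a powi m) (x powi m)"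
  unfolding power_int_def
  by (auto intro!: ev_power ev_inverse)

lemma ev_prod: "(\<And>i. i \<in> S \<Longrightarrow> ev (f i) (g i)) \<Longrightarrow> ev (prod f S) (prod g S)"
  by (induction S rule: infinite_finite_induct) (auto simp: ev_1 intro!: ev_mult)

end



lemma to_fract_pow: "to_fract (p ^ m) = to_fract p ^ m"
  by (induction m) simp_all

lemma varq_pow_eq1: "(var_q :: 'k::field_gcd rfun) ^ m = 1 \<Longrightarrow> m = 0"
proof -
  assume h: "(var_q :: 'k rfun) ^ m = 1"
  have "to_fract ([:[:[:0,1:]:]:] ^ m :: 'k rpoly) = to_fract 1"
    using h by (simp add: var_q_def to_fract_pow)
  hence "([:[:[:0,1:]:]:] ^ m :: 'k rpoly) = 1" by (simp only: to_fract_eq_iff)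
  hence "[:[:[:0,1:] ^ m:]:] = (1 :: 'k rpoly)" by (simp add: poly_const_pow)
  hence "([:0,1:] ^ m :: 'k poly) = 1" by (simp add: one_pCons)
  hence "degree ([:0,1:] ^ m :: 'k poly) = 0" by simp
  thus "m = 0" by (simp add: degree_power_eq)
qed

lemma varq_nz: "(var_q :: 'k::field_gcd rfun) \<noteq> 0"
  by (simp add: var_q_def)

lemma qnum_nz: assumes "x \<noteq> 0" shows "(qnum x :: 'k::field_gcd rfun) \<noteq> 0"
proof
  assume h: "(qnum x :: 'k rfun) = 0"
  let ?X = "var_q :: 'k rfun"
  have X0: "?X \<noteq> 0" by (rule varq_nz)
  have d: "?X - inverse ?X \<noteq> 0"
  proof
    assume "?X - inverse ?X = 0"
    hence "?X * ?X = inverse ?X * ?X" by simp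
    hence "?X * ?X = 1" using X0 by simp
    hence "?X ^ 2 = 1" by (simp add: power2_eq_square)
    thus False using varq_pow_eq1 by fastforce
  qed
  have "?X powi x - ?X powi (-x) = 0" using h d by (simp add: qnum_def)
  hence "?X powi x * ?X powi x = ?X powi (-x) * ?X powi x" by simp
  also have "\<dots> = 1" using X0 by (simp add: power_int_minus)
  finally have "?X powi (x + x) = 1" using X0 by (subst power_int_add) auto
  hence "?X ^ nat (\<bar>x\<bar> + \<bar>x\<bar>) = 1" using X0
    by (cases "x \<ge> 0") (auto simp: power_int_def power_inverse)
  hence "nat (\<bar>x\<bar> + \<bar>x\<bar>) = 0" by (rule varq_pow_eq1)
  thus False using assms by simp
qed




context fixes q0 Q1 Q2 :: "'k::field_gcd"
  assumes q0nz: "q0 \<noteq> 0" and q0sq: "q0 * q0 \<noteq> 1" and Q1nz: "Q1 \<noteq> 0" and Q2nz: "Q2 \<noteq> 0"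
begin

lemma dnz: "q0 - inverse q0 \<noteq> 0"
proof
  assume "q0 - inverse q0 = 0"
  hence "q0 * q0 = inverse q0 * q0" by simp
  thus False using q0nz q0sq by simp
qed

lemma ev_q: "ev q0 Q1 Q2 var_q q0"
  using ev_poly[of q0 Q1 Q2 "[:[:[:0, 1:]:]:]"] by (simp add: var_q_def eval3_def)
lemma ev_Q1: "ev q0 Q1 Q2 var_Q1 Q1"
  using ev_poly[of q0 Q1 Q2 "[:[:0, 1:]:]"] by (simp add: var_Q1_def eval3_def)
lemma ev_Q2: "ev q0 Q1 Q2 var_Q2 Q2"
  using ev_poly[of q0 Q1 Q2 "[:0, 1:]"] by (simp add: var_Q2_def eval3_def)

lemma ev_qnum: "ev q0 Q1 Q2 (qnum x) ((q0 powi x - q0 powi (-x)) / (q0 - inverse q0))"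
  unfolding qnum_def
  by (intro ev_divide ev_diff ev_powi ev_inverse ev_q q0nz dnz)

lemma ev_qnumw:
  assumes "ev q0 Q1 Q2 Q c" "c \<noteq> 0"
  shows "ev q0 Q1 Q2 (qnumw Q x) ((c * q0 powi x - inverse c * q0 powi (-x)) / (q0 - inverse q0))"
  unfolding qnumw_def
  by (intro ev_divide ev_diff ev_mult ev_powi ev_inverse ev_q q0nz dnz assms)

end

lemma qv_nz:
  fixes q0 :: "'k::field_gcd"
  assumes "q0 \<noteq> 0" "q0 ^ (2*t) \<noteq> 1"
  shows "q0 powi (int t) - q0 powi (- int t) \<noteq> 0"
proof
  assume "q0 powi (int t) - q0 powi (- int t) = 0"
  hence "q0 ^ t = inverse (q0 ^ t)" by (simp add: power_int_minus)
  hence "q0 ^ t * q0 ^ t = inverse (q0 ^ t) * q0 ^ t" by simp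
  hence "q0 ^ t * q0 ^ t = 1" using assms(1) by simp
  thus False using assms(2) by (simp add: power_add[symmetric] mult_2)
qed

lemma qwv_nz:
  fixes q0 Q :: "'k::field_gcd"
  assumes "q0 \<noteq> 0" "Q \<noteq> 0" "\<forall>m::int. Q \<noteq> q0 powi m \<and> Q \<noteq> - (q0 powi m)"
  shows "Q * q0 powi x - inverse Q * q0 powi (-x) \<noteq> 0"
proof
  assume "Q * q0 powi x - inverse Q * q0 powi (-x) = 0"
  hence "Q * q0 powi x * (Q * q0 powi x) = inverse Q * q0 powi (-x) * (Q * q0 powi x)" by simp
  also have "\<dots> = (inverse Q * Q) * (inverse (q0 powi x) * q0 powi x)" by (simp add: power_int_minus ac_simps)
  also have "\<dots> = 1" using assms(1,2) by simp
  finally have "(Q * q0 powi x - 1) * (Q * q0 powi x + 1) = 0" by (simp add: algebra_simps)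
  hence "Q * q0 powi x = 1 \<or> Q * q0 powi x = -1" by (auto simp: eq_neg_iff_add_eq_0)
  hence "Q = q0 powi (-x) \<or> Q = - (q0 powi (-x))" using assms(1)
    by (auto simp: power_int_minus field_simps)
  thus False using assms(3) by blast
qed




definition qarg :: "nat \<Rightarrow> blob \<Rightarrow> nat \<times> nat \<Rightarrow> int" where
  "qarg n d g = (let a = int (fst g); j = int (snd g); b = (j - a - 1) div 2 in
     (case d of Undec \<Rightarrow> b + 1 | LBlob \<Rightarrow> j div 2 | RBlob \<Rightarrow> (int n - a + 1) div 2))"

definition rest :: "nat \<Rightarrow> blob \<Rightarrow> nat \<times> nat \<Rightarrow> 'k::field_gcd rfun" where
  "rest n d g = (let a = int (fst g); j = int (snd g) in
     (case d of Undec \<Rightarrow> 1 | LBlob \<Rightarrow> qnumw var_Q1 ((1 - a) div 2)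
      | RBlob \<Rightarrow> qnumw var_Q2 ((j - int n) div 2)))"

lemma h3_arc_split: "h3_arc n d g = qnum (qarg n d g) * rest n d g"
  by (cases d) (simp_all add: h3_arc_def qarg_def rest_def Let_def)

definition span :: "nat \<Rightarrow> blob \<Rightarrow> nat \<times> nat \<Rightarrow> nat set" where
  "span n d g = (case d of Undec \<Rightarrow> {fst g..snd g} | LBlob \<Rightarrow> {1..snd g} | RBlob \<Rightarrow> {fst g..n})"

locale hd =
  fixes n l :: nat and A :: "(nat \<times> nat) set" and dec :: "nat \<times> nat \<Rightarrow> blob"
  assumes H: "is_halfdiag n l (A, dec)" and lpos: "l \<ge> 1"
begin

lemma card_A: "card A = l" using H by (simp add: is_halfdiag_def)
lemma fin: "finite A" using card_A lpos card.infinite by fastforce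
lemma arc: "(i, j) \<in> A \<Longrightarrow> 1 \<le> i \<and> i < j \<and> j \<le> n" using H by (auto simp: is_halfdiag_def)
lemma disj: "g \<in> A \<Longrightarrow> g' \<in> A \<Longrightarrow> g \<noteq> g' \<Longrightarrow> {fst g, snd g} \<inter> {fst g', snd g'} = {}"
  using H by (simp add: is_halfdiag_def)
lemma nofree: "(i, j) \<in> A \<Longrightarrow> v \<in> free_vertices n A \<Longrightarrow> \<not> (i < v \<and> v < j)"
  using H by (fastforce simp: is_halfdiag_def)
lemma decL: "g \<in> A \<Longrightarrow> dec g = LBlob \<Longrightarrow> left_exposed n A g"
  using H by (simp add: is_halfdiag_def)
lemma decR: "g \<in> A \<Longrightarrow> dec g = RBlob \<Longrightarrow> right_exposed n A g"
  using H by (simp add: is_halfdiag_def)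

lemma finE: "finite (endpoints A)" using fin by (simp add: endpoints_def)
lemma cardE: "card (endpoints A) \<le> 2 * l"
proof -
  have "card (endpoints A) \<le> card (fst ` A) + card (snd ` A)"
    unfolding endpoints_def by (rule card_Un_le)
  also have "\<dots> \<le> card A + card A" by (intro add_mono card_image_le fin)
  finally show ?thesis using card_A by simp
qed

lemma in_E: "1 \<le> v \<Longrightarrow> v \<le> n \<Longrightarrow> v \<notin> free_vertices n A \<Longrightarrow> v \<in> endpoints A"
  by (simp add: free_vertices_def)

lemma span_sub: assumes g: "g \<in> A" shows "span n (dec g) g \<subseteq> endpoints A"
proof -
  obtain i j where gij: "g = (i, j)" by (cases g)
  have a: "1 \<le> i" "i < j" "j \<le> n" using arc g gij by auto
  have ij: "{i..j} \<subseteq> endpoints A"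
  proof
    fix v assume v: "v \<in> {i..j}"
    show "v \<in> endpoints A"
    proof (cases "v = i \<or> v = j")
      case True thus ?thesis using g gij by (force simp: endpoints_def)
    next
      case False
      hence "v \<notin> free_vertices n A" using nofree[of i j v] g gij v by auto
      thus ?thesis using in_E v a by auto
    qed
  qed
  show ?thesis
  proof (cases "dec g")
    case Undec thus ?thesis using ij gij by (simp add: span_def)
  next
    case LBlob
    hence le: "left_exposed n A g" using decL g by simp
    have "{1..j} \<subseteq> endpoints A"
    proof
      fix v assume v: "v \<in> {1..j}"
      show "v \<in> endpoints A"
      proof (cases "v < i")
        case True
        hence "v \<notin> free_vertices n A" using le gij by (auto simp: left_exposed_def)
        thus ?thesis using in_E v a by auto
      next
        case False thus ?thesis using ij v by auto
      qed
    qed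
    thus ?thesis using LBlob gij by (simp add: span_def)
  next
    case RBlob
    hence re: "right_exposed n A g" using decR g by simp
    have "{i..n} \<subseteq> endpoints A"
    proof
      fix v assume v: "v \<in> {i..n}"
      show "v \<in> endpoints A"
      proof (cases "j < v")
        case True
        hence "v \<notin> free_vertices n A" using re gij by (auto simp: right_exposed_def)
        thus ?thesis using in_E v a by auto
      next
        case False thus ?thesis using ij v by auto
      qed
    qed
    thus ?thesis using RBlob gij by (simp add: span_def)
  qed
qed

lemma card_span_le: "g \<in> A \<Longrightarrow> card (span n (dec g) g) \<le> 2 * l"
  using span_sub card_mono finE cardE le_trans by metis

lemma qarg_bounds: assumes g: "g \<in> A"
  shows "1 \<le> qarg n (dec g) g \<and> qarg n (dec g) g \<le> int l \<and>
         (qarg n (dec g) g = int l \<longrightarrow> card (span n (dec g) g) \<ge> 2 * l)"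
proof -
  obtain i j where gij: "g = (i, j)" by (cases g)
  have a: "1 \<le> i" "i < j" "j \<le> n" using arc g gij by auto
  have c: "card (span n (dec g) g) \<le> 2 * l" using card_span_le g .
  show ?thesis
  proof (cases "dec g")
    case Undec
    with c gij have "j + 1 - i \<le> 2 * l" by (simp add: span_def)
    thus ?thesis using Undec gij a by (simp add: span_def qarg_def Let_def) presburger
  next
    case LBlob
    with c gij have "j \<le> 2 * l" by (simp add: span_def)
    thus ?thesis using LBlob gij a by (simp add: span_def qarg_def Let_def) presburger
  next
    case RBlob
    with c gij have "n + 1 - i \<le> 2 * l" by (simp add: span_def)
    thus ?thesis using RBlob gij a by (simp add: span_def qarg_def Let_def) presburger
  qed
qed

lemma span_full: assumes g: "g \<in> A" and q: "qarg n (dec g) g = int l"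
  shows "span n (dec g) g = endpoints A"
  using card_seteq[OF finE span_sub[OF g]] qarg_bounds[OF g] q cardE by linarith

lemma unique_vanish:
  assumes g1: "g1 \<in> A" and g2: "g2 \<in> A" and q1: "qarg n (dec g1) g1 = int l"
    and q2: "qarg n (dec g2) g2 = int l" and nl: "n > 2 * l"
  shows "g1 = g2"
proof (rule ccontr)
  assume ne: "g1 \<noteq> g2"
  obtain i1 j1 where g1ij: "g1 = (i1, j1)" by (cases g1)
  obtain i2 j2 where g2ij: "g2 = (i2, j2)" by (cases g2)
  have a1: "1 \<le> i1" "i1 < j1" "j1 \<le> n" using arc g1 g1ij by auto
  have a2: "1 \<le> i2" "i2 < j2" "j2 \<le> n" using arc g2 g2ij by auto
  have S: "span n (dec g1) g1 = span n (dec g2) g2"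
    using span_full[OF g1 q1] span_full[OF g2 q2] by simp
  have D: "{i1, j1} \<inter> {i2, j2} = {}" using disj[OF g1 g2 ne] g1ij g2ij by simp
  have LR: False if "span n LBlob ga = span n RBlob gb" "span n LBlob ga = endpoints A"
    "ga \<in> A" "gb \<in> A" for ga gb
  proof -
    obtain ia ja where ga: "ga = (ia, ja)" by (cases ga)
    obtain ib jb where gb: "gb = (ib, jb)" by (cases gb)
    have "1 \<le> ia" "ia < ja" "ja \<le> n" "1 \<le> ib" "ib < jb" "jb \<le> n"
      using arc that(3,4) ga gb by auto
    moreover from that(1) have "{1..ja} = {ib..n}" using ga gb by (simp add: span_def)
    ultimately have "ja = n" by (simp add: Icc_eq_Icc)
    hence "endpoints A = {1..n}" using that(2) ga by (simp add: span_def)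
    hence "card (endpoints A) = n" by simp
    thus False using cardE nl by simp
  qed
  show False
  proof (cases "dec g1"; cases "dec g2")
    assume "dec g1 = LBlob" "dec g2 = RBlob"
    thus False using LR[OF _ _ g1 g2] S span_full[OF g1 q1] by simp
  next
    assume "dec g1 = RBlob" "dec g2 = LBlob"
    thus False using LR[OF _ _ g2 g1] S span_full[OF g2 q2] by simp
  qed (use S D g1ij g2ij a1 a2 in \<open>auto simp: span_def Icc_eq_Icc\<close>)
qed

end



context fixes q0 Q1 Q2 :: "'k::field_gcd" begin

definition evnz :: "'k rfun \<Rightarrow> bool" where
  "evnz h \<longleftrightarrow> (\<exists>c. ev q0 Q1 Q2 h c \<and> c \<noteq> 0)"

lemma evnz_mult: "evnz a \<Longrightarrow> evnz b \<Longrightarrow> evnz (a * b)"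
  unfolding evnz_def
proof (elim exE conjE)
  fix x y assume "ev q0 Q1 Q2 a x" "x \<noteq> 0" "ev q0 Q1 Q2 b y" "y \<noteq> 0"
  thus "\<exists>c. ev q0 Q1 Q2 (a * b) c \<and> c \<noteq> 0" by (intro exI[of _ "x * y"]) (simp add: ev_mult)
qed

lemma evnz_div: "evnz a \<Longrightarrow> evnz b \<Longrightarrow> evnz (a / b)"
  unfolding evnz_def
proof (elim exE conjE)
  fix x y assume "ev q0 Q1 Q2 a x" "x \<noteq> 0" "ev q0 Q1 Q2 b y" "y \<noteq> 0"
  thus "\<exists>c. ev q0 Q1 Q2 (a / b) c \<and> c \<noteq> 0" by (intro exI[of _ "x / y"]) (simp add: ev_divide)
qed

lemma evany_div: "ev q0 Q1 Q2 a x \<Longrightarrow> evnz b \<Longrightarrow> \<exists>c. ev q0 Q1 Q2 (a / b) c"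
  unfolding evnz_def
proof (elim exE conjE)
  fix y assume "ev q0 Q1 Q2 a x" "ev q0 Q1 Q2 b y" "y \<noteq> 0"
  thus "\<exists>c. ev q0 Q1 Q2 (a / b) c" by (intro exI[of _ "x / y"]) (simp add: ev_divide)
qed

lemma evnz_1: "evnz 1" unfolding evnz_def by (intro exI[of _ 1]) (simp add: ev_1)

lemma evnz_prod: "(\<And>i. i \<in> S \<Longrightarrow> evnz (f i)) \<Longrightarrow> evnz (prod f S)"
proof -
  assume h: "\<And>i. i \<in> S \<Longrightarrow> evnz (f i)"
  then obtain g where g: "\<And>i. i \<in> S \<Longrightarrow> ev q0 Q1 Q2 (f i) (g i) \<and> g i \<noteq> 0"
    unfolding evnz_def by metis
  have "ev q0 Q1 Q2 (prod f S) (prod g S)" using g by (intro ev_prod) auto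
  moreover have "prod g S \<noteq> 0" using g by (cases "finite S") auto
  ultimately show ?thesis unfolding evnz_def by blast
qed

lemma evany_prod: "(\<And>i. i \<in> S \<Longrightarrow> \<exists>c. ev q0 Q1 Q2 (f i) c) \<Longrightarrow> \<exists>c. ev q0 Q1 Q2 (prod f S) c"
proof -
  assume h: "\<And>i. i \<in> S \<Longrightarrow> \<exists>c. ev q0 Q1 Q2 (f i) c"
  then obtain g where g: "\<And>i. i \<in> S \<Longrightarrow> ev q0 Q1 Q2 (f i) (g i)" by metis
  show ?thesis using g by (intro exI[of _ "prod g S"] ev_prod) auto
qed

end

locale pt =
  fixes q0 Q1 Q2 :: "'k::field_gcd" and l :: nat
  assumes q0nz: "q0 \<noteq> 0" and q0sq: "q0 * q0 \<noteq> 1"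
    and prim: "\<And>t. 0 < t \<Longrightarrow> t < l \<Longrightarrow> q0 ^ (2 * t) \<noteq> 1"
    and Q1nz: "Q1 \<noteq> 0" and Q2nz: "Q2 \<noteq> 0"
    and Q1g: "\<forall>m::int. Q1 \<noteq> q0 powi m \<and> Q1 \<noteq> - (q0 powi m)"
    and Q2g: "\<forall>m::int. Q2 \<noteq> q0 powi m \<and> Q2 \<noteq> - (q0 powi m)"
begin

lemma evany_qnum: "\<exists>c. ev q0 Q1 Q2 (qnum x) c"
  using ev_qnum[OF q0nz q0sq Q1nz Q2nz] by blast

lemma evnz_qnum: assumes "1 \<le> x" "x < int l" shows "evnz q0 Q1 Q2 (qnum x)"
proof -
  define t where "t = nat x"
  have t: "x = int t" "0 < t" "t < l" using assms unfolding t_def by auto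
  have "q0 powi (int t) - q0 powi (- int t) \<noteq> 0" using qv_nz q0nz prim t by blast
  moreover have "q0 - inverse q0 \<noteq> 0" using dnz[OF q0nz q0sq Q1nz Q2nz] .
  ultimately show ?thesis unfolding evnz_def using ev_qnum[OF q0nz q0sq Q1nz Q2nz, of x] t
    by (intro exI[of _ "(q0 powi x - q0 powi (-x)) / (q0 - inverse q0)"]) simp
qed

lemma evnz_qnumw1: "evnz q0 Q1 Q2 (qnumw var_Q1 x)"
  unfolding evnz_def
  using ev_qnumw[OF q0nz q0sq Q1nz Q2nz ev_Q1[OF q0nz q0sq Q1nz Q2nz] Q1nz, of x]
    qwv_nz[OF q0nz Q1nz Q1g, of x] dnz[OF q0nz q0sq Q1nz Q2nz] by (intro exI) (erule conjI, simp)

lemma evnz_qnumw2: "evnz q0 Q1 Q2 (qnumw var_Q2 x)"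
  unfolding evnz_def
  using ev_qnumw[OF q0nz q0sq Q1nz Q2nz ev_Q2[OF q0nz q0sq Q1nz Q2nz] Q2nz, of x]
    qwv_nz[OF q0nz Q2nz Q2g, of x] dnz[OF q0nz q0sq Q1nz Q2nz] by (intro exI) (erule conjI, simp)

lemma evnz_rest: "evnz q0 Q1 Q2 (rest n d g)"
  by (cases d) (simp_all add: rest_def Let_def evnz_1 evnz_qnumw1 evnz_qnumw2)

lemma evnz_prop: "evnz q0 Q1 Q2 (h3_prop l a)"
  unfolding evnz_def h3_prop_def
proof (cases "a mod (4 * l) \<in> {1..2 * l}")
  case True thus "\<exists>c. ev q0 Q1 Q2 (if a mod (4 * l) \<in> {1..2 * l} then 1 else - 1) c \<and> c \<noteq> 0"
    using ev_1[of q0 Q1 Q2] by (intro exI[of _ 1]) (simp only: if_True, simp)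
next
  case False thus "\<exists>c. ev q0 Q1 Q2 (if a mod (4 * l) \<in> {1..2 * l} then 1 else - 1) c \<and> c \<noteq> 0"
    using ev_uminus[OF ev_1[of q0 Q1 Q2]] by (intro exI[of _ "-1"]) (simp only: if_False, simp)
qed

lemma evnz_fall1: "evnz q0 Q1 Q2 (qfallfact var_Q1 m)"
  unfolding qfallfact_def by (intro evnz_prod evnz_qnumw1)

lemma evnz_fall2: "evnz q0 Q1 Q2 (qfallfact var_Q2 m)"
  unfolding qfallfact_def by (intro evnz_prod evnz_qnumw2)

lemma evnz_qfact: "m < l \<Longrightarrow> evnz q0 Q1 Q2 (qfact m)"
  unfolding qfact_def by (intro evnz_prod evnz_qnum) auto

lemma evany_qfact: "\<exists>c. ev q0 Q1 Q2 (qfact m) c"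
  unfolding qfact_def by (intro evany_prod evany_qnum)

end




lemma qfact_Suc: "qfact (Suc m) = qfact m * qnum (int (Suc m))"
  unfolding qfact_def by (simp add: prod.cl_ivl_Suc)

lemma main:
  fixes q0 Q1 Q2 :: "'k::field_gcd"
  assumes P: "pt q0 Q1 Q2 l" and Hd: "hd n l A dec" and nl: "n > 2 * l"
  shows "(\<exists>c. ev q0 Q1 Q2 (h3 n l (A, dec) :: 'k rfun) c) \<and>
    ((\<exists>g\<in>A. qarg n (dec g) g = int l) \<longrightarrow> evnz q0 Q1 Q2 (h3 n l (A, dec) :: 'k rfun))"
proof -
  interpret pt q0 Q1 Q2 l by (rule P)
  interpret hd n l A dec by (rule Hd)
  define Props :: "'k rfun" where "Props = prod (h3_prop l) (free_vertices n A)"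
  define F12 :: "'k rfun" where "F12 = qfallfact var_Q1 l * qfallfact var_Q2 l"
  have h3eq: "h3 n l (A, dec) = (qfact l * F12) / (prod (\<lambda>g. h3_arc n (dec g) g) A * Props)"
    unfolding h3_def Props_def F12_def by (simp only: fst_conv snd_conv mult.assoc)
  have nzP: "evnz q0 Q1 Q2 Props" unfolding Props_def by (intro evnz_prod evnz_prop)
  have nzF: "evnz q0 Q1 Q2 F12" unfolding F12_def by (intro evnz_mult evnz_fall1 evnz_fall2)
  have arcnz: "evnz q0 Q1 Q2 (h3_arc n (dec g) g)" if "g \<in> A" "qarg n (dec g) g \<noteq> int l" for g
  proof -
    have "1 \<le> qarg n (dec g) g" "qarg n (dec g) g < int l" using qarg_bounds[OF that(1)] that(2) by auto
    thus ?thesis unfolding h3_arc_split by (intro evnz_mult evnz_qnum evnz_rest)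
  qed
  show ?thesis
  proof (cases "\<exists>g\<in>A. qarg n (dec g) g = int l")
    case False
    have "evnz q0 Q1 Q2 (prod (\<lambda>g. h3_arc n (dec g) g) A * Props)"
      using False by (intro evnz_mult nzP evnz_prod arcnz) auto
    moreover obtain c where "ev q0 Q1 Q2 (qfact l * F12) c"
      using evany_qfact nzF unfolding evnz_def by (meson ev_mult)
    ultimately have "\<exists>c. ev q0 Q1 Q2 ((qfact l * F12) / (prod (\<lambda>g. h3_arc n (dec g) g) A * Props)) c"
      by (intro evany_div)
    thus ?thesis using False h3eq by simp
  next
    case True
    then obtain g0 where g0: "g0 \<in> A" "qarg n (dec g0) g0 = int l" by blast
    have others: "evnz q0 Q1 Q2 (prod (\<lambda>g. h3_arc n (dec g) g) (A - {g0}))"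
    proof (intro evnz_prod arcnz)
      fix g assume "g \<in> A - {g0}"
      thus "g \<in> A" "qarg n (dec g) g \<noteq> int l" using unique_vanish[OF _ g0(1) _ g0(2) nl, of g] by blast+
    qed
    obtain m where m: "l = Suc m" using lpos by (cases l) auto
    have ql: "(qnum (int l) :: 'k rfun) \<noteq> 0" using qnum_nz[of "int l"] lpos by simp
    have "h3 n l (A, dec) = (qnum (int l) * (qfact m * F12)) /
       (qnum (int l) * (rest n (dec g0) g0 * prod (\<lambda>g. h3_arc n (dec g) g) (A - {g0}) * Props))"
    proof -
      have pr: "prod (\<lambda>g. h3_arc n (dec g) g) A = h3_arc n (dec g0) g0 * prod (\<lambda>g. h3_arc n (dec g) g) (A - {g0})"
        by (rule prod.remove[OF fin g0(1)])
      have qf: "qfact l = qfact m * (qnum (int l) :: 'k rfun)" using m qfact_Suc by simp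
      show ?thesis unfolding h3eq pr qf h3_arc_split[of n "dec g0" g0] g0(2) by (simp only: ac_simps)
    qed
    also have "\<dots> = (qfact m * F12) / (rest n (dec g0) g0 * prod (\<lambda>g. h3_arc n (dec g) g) (A - {g0}) * Props)"
      using ql by (rule mult_divide_mult_cancel_left)
    finally have "evnz q0 Q1 Q2 (h3 n l (A, dec))"
      using m by (simp only:) (intro evnz_div evnz_mult evnz_qfact nzF evnz_rest others nzP, simp)
    thus ?thesis unfolding evnz_def by blast
  qed
qed




definition A1 :: "nat \<Rightarrow> (nat \<times> nat) set" where
  "A1 l = (\<lambda>i. (2 * i - 1, 2 * i)) ` {1..l}"

definition dec1 :: "nat \<Rightarrow> nat \<times> nat \<Rightarrow> blob" where
  "dec1 l g = (if g = (2 * l - 1, 2 * l) then LBlob else Undec)"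

lemma memA1: "g \<in> A1 l \<longleftrightarrow> (\<exists>i. 1 \<le> i \<and> i \<le> l \<and> g = (2 * i - 1, 2 * i))"
  by (auto simp: A1_def)

lemma A1_shape: "(i, j) \<in> A1 l \<Longrightarrow> odd i \<and> j = i + 1"
  by (auto simp: A1_def)

lemma dj: "odd (i::nat) \<Longrightarrow> odd i' \<Longrightarrow> i \<noteq> i' \<Longrightarrow> {i, i+1} \<inter> {i', i'+1} = {}"
  by auto
lemma A1_disj: "g \<in> A1 l \<Longrightarrow> g' \<in> A1 l \<Longrightarrow> g \<noteq> g' \<Longrightarrow> {fst g, snd g} \<inter> {fst g', snd g'} = {}"
proof -
  assume g: "g \<in> A1 l" "g' \<in> A1 l" "g \<noteq> g'"
  obtain i j where gi: "g = (i, j)" by (cases g)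
  obtain i' j' where gi': "g' = (i', j')" by (cases g')
  have a: "odd i" "j = i + 1" using A1_shape g(1) gi by auto
  have b: "odd i'" "j' = i' + 1" using A1_shape g(2) gi' by auto
  have "i \<noteq> i'" using g(3) gi gi' a b by auto
  thus ?thesis using dj[OF a(1) b(1)] gi gi' a b by simp
qed

lemma endA1: "endpoints (A1 l) = {1..2 * l}"
proof (rule set_eqI)
  fix v
  show "v \<in> endpoints (A1 l) \<longleftrightarrow> v \<in> {1..2 * l}"
  proof
    assume "v \<in> endpoints (A1 l)"
    thus "v \<in> {1..2 * l}" by (auto simp: endpoints_def A1_def)
  next
    assume v: "v \<in> {1..2 * l}"
    define i where "i = (v + 1) div 2"
    have i: "1 \<le> i" "i \<le> l" using v unfolding i_def by auto
    have "(2 * i - 1, 2 * i) \<in> A1 l" using i by (auto simp: A1_def)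
    moreover have "v = 2 * i - 1 \<or> v = 2 * i" unfolding i_def by presburger
    ultimately show "v \<in> endpoints (A1 l)" unfolding endpoints_def by force
  qed
qed

lemma D1_halfdiag:
  assumes l: "l \<ge> 1" and nl: "n > 2 * l"
  shows "is_halfdiag n l (A1 l, dec1 l)"
proof -
  have fv: "free_vertices n (A1 l) = {2 * l + 1..n}"
    unfolding free_vertices_def endA1 by auto
  have card: "card (A1 l) = l"
    unfolding A1_def by (subst card_image) (auto simp: inj_on_def)
  have g0: "(2 * l - 1, 2 * l) \<in> A1 l" using l by (auto simp: A1_def intro!: image_eqI[of _ _ l])
  have c2: "\<forall>(i, j)\<in>A1 l. 1 \<le> i \<and> i < j \<and> j \<le> n" using nl by (auto simp: A1_def)
  have c3: "\<forall>g\<in>A1 l. \<forall>g'\<in>A1 l. g \<noteq> g' \<longrightarrow> {fst g, snd g} \<inter> {fst g', snd g'} = {}"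
    using A1_disj by blast
  have c4: "\<forall>(i, j)\<in>A1 l. \<forall>(i', j')\<in>A1 l. \<not> (i < i' \<and> i' < j \<and> j < j')"
  proof (clarify)
    fix i j i' j' assume "(i, j) \<in> A1 l" "i < i'" "i' < j"
    thus False using A1_shape by force
  qed
  have c5: "\<forall>(i, j)\<in>A1 l. \<forall>v\<in>free_vertices n (A1 l). \<not> (i < v \<and> v < j)"
  proof (clarify)
    fix i j v assume "(i, j) \<in> A1 l" "i < v" "v < j"
    thus False using A1_shape by force
  qed
  have le: "left_exposed n (A1 l) (2 * l - 1, 2 * l)"
    unfolding left_exposed_def fv by (auto simp: A1_def)
  have c6: "\<forall>g\<in>A1 l. dec1 l g = LBlob \<longrightarrow> left_exposed n (A1 l) g"
    using le by (auto simp: dec1_def split: if_splits)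
  have c7: "\<forall>g\<in>A1 l. dec1 l g = RBlob \<longrightarrow> right_exposed n (A1 l) g"
    by (auto simp: dec1_def split: if_splits)
  have c8: "\<forall>g. g \<notin> A1 l \<longrightarrow> dec1 l g = Undec" using g0 by (auto simp: dec1_def)
  show ?thesis
    unfolding is_halfdiag_def Let_def fst_conv snd_conv
    using card c2 c3 c4 c5 c6 c7 c8 by blast
qed

lemma D1_vanish: "l \<ge> 1 \<Longrightarrow> qarg n (dec1 l (2 * l - 1, 2 * l)) (2 * l - 1, 2 * l) = int l"
  by (simp add: dec1_def qarg_def)

theorem lemma4p3p1:
  fixes n l :: nat and q0 Q10 Q20 :: "'k::field_gcd"
  assumes "2 * l \<ge> 6" and "n > 2 * l"
    and "q0 ^ (2 * l) = 1" and "\<forall>m. 0 < m \<and> m < 2 * l \<longrightarrow> q0 ^ m \<noteq> 1"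
    and "Q10 \<noteq> 0" and "\<forall>m::int. Q10 \<noteq> q0 powi m \<and> Q10 \<noteq> - (q0 powi m)"
    and "Q20 \<noteq> 0" and "\<forall>m::int. Q20 \<noteq> q0 powi m \<and> Q20 \<noteq> - (q0 powi m)"
  shows "(\<forall>D\<in>halfdiags n l. defined_at q0 Q10 Q20 (h3 n l D :: 'k rfun)) \<and>
         (\<exists>D\<in>halfdiags n l. value_at q0 Q10 Q20 (h3 n l D :: 'k rfun) \<noteq> 0)"
proof -
  have l1: "l \<ge> 1" using assms(1) by simp
  have q0nz: "q0 \<noteq> 0" proof
    assume "q0 = 0" thus False using assms(3) l1 by (simp add: power_0_left)
  qed
  have "q0 ^ 2 \<noteq> 1" using assms(4) assms(1) by simp
  hence q0sq: "q0 * q0 \<noteq> 1" by (simp add: power2_eq_square)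
  have prim: "q0 ^ (2 * t) \<noteq> 1" if "0 < t" "t < l" for t using assms(4) that by simp
  have P: "pt q0 Q10 Q20 l"
    by (unfold_locales) (use q0nz q0sq prim assms(5-8) in auto)
  have M: "(\<exists>c. ev q0 Q10 Q20 (h3 n l D :: 'k rfun) c) \<and>
    ((\<exists>g\<in>fst D. qarg n (snd D g) g = int l) \<longrightarrow> evnz q0 Q10 Q20 (h3 n l D :: 'k rfun))"
    if "D \<in> halfdiags n l" for D
  proof -
    obtain A dec where D: "D = (A, dec)" by (cases D)
    have "hd n l A dec" using that D l1 by unfold_locales (auto simp: halfdiags_def)
    from main[OF P this assms(2)] show ?thesis using D by simp
  qed
  have part1: "\<forall>D\<in>halfdiags n l. defined_at q0 Q10 Q20 (h3 n l D :: 'k rfun)"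
  proof
    fix D assume "D \<in> halfdiags n l"
    then obtain c where "ev q0 Q10 Q20 (h3 n l D :: 'k rfun) c" using M by blast
    thus "defined_at q0 Q10 Q20 (h3 n l D :: 'k rfun)" using ev_imp by blast
  qed
  have D1: "(A1 l, dec1 l) \<in> halfdiags n l" using D1_halfdiag[OF l1 assms(2)] by (simp add: halfdiags_def)
  have g0: "(2 * l - 1, 2 * l) \<in> A1 l" using l1 by (auto simp: A1_def intro!: image_eqI[of _ _ l])
  have "evnz q0 Q10 Q20 (h3 n l (A1 l, dec1 l) :: 'k rfun)"
    using M[OF D1] g0 D1_vanish[OF l1, of n] by auto
  then obtain c where "ev q0 Q10 Q20 (h3 n l (A1 l, dec1 l) :: 'k rfun) c" "c \<noteq> 0"
    unfolding evnz_def by blast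
  hence "value_at q0 Q10 Q20 (h3 n l (A1 l, dec1 l) :: 'k rfun) \<noteq> 0" using ev_imp by metis
  thus ?thesis using part1 D1 by blast
qed



end
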